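(* Consider the quantized estimation system described in the context, with parameter set $\Theta\subset\mathbb{R}^{D_\theta}$. Assume (i) the interior of $\Theta$ in $\mathbb{R}^{D_\theta}$ is nonempty, and (ii) for every $j\in\{1,\dots,N\}$ and every $\mathbf{s}\in\mathcal{S}_j$, the function $\theta\mapsto q_j^{(\mathbf{s})}(\theta)$ is twice differentiable with respect to $\theta$ for all $\theta\in\Theta$. Then for any $\theta\in\Theta$, any quantization regions $\{I_{jl}^{(r)}\}$ and any statistical models $\{(\mathscr{X}_j,\mathscr{F}_j,\mathscr{P}_j^{\theta})\}$, if $$D_\theta>\lambda(N,\{R_{jl}\}):=\sum_{j=1}^N\prod_{l=1}^{L_j}R_{jl}-N,$$ then the Fisher information matrix $\mathbf{J}(\theta)$ is singular.
   Context: Setting: $\Theta\subset\mathbb{R}^{D_\theta}$ is a parameter set. There are $N\ge 1$ sensors. Sensor $j$ observes a random vector $\mathbf{x}_j$ with statistical model $(\mathscr{X}_j,\mathscr{F}_j,\mathscr{P}_j^{\theta})$, i.e. its law is the probability measure $\mathscr{P}_j^\theta$ on the measurable space $(\mathscr{X}_j,\mathscr{F}_j)$, indexed by $\theta\in\Theta$; $\mathbf{x}_1,\dots,\mathbf{x}_N$ are independent. Each $\mathbf{x}_j$ is partitioned into $L_j\ge1$ disjoint subvectors, $\mathbf{x}_j=[\mathbf{x}_{j1}^T,\dots,\mathbf{x}_{jL_j}^T]^T$. For each $j,l$, $\gamma_{jl}$ is an $R_{jl}$-level vector quantizer ($R_{jl}\ge1$ an integer): there are disjoint quantization regions $I_{jl}^{(1)},\dots,I_{jl}^{(R_{jl})}$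 covering the domain of $\gamma_{jl}$, and $\gamma_{jl}(\mathbf{x}_{jl})=\sum_{r=1}^{R_{jl}} r\,\mathbb{1}\{\mathbf{x}_{jl}\in I_{jl}^{(r)}\}$. The superquantizer $\Gamma_j(\mathbf{x}_j)=[\gamma_{j1}(\mathbf{x}_{j1}),\dots,\gamma_{jL_j}(\mathbf{x}_{jL_j})]^T$ is a measurable map from $(\mathscr{X}_j,\mathscr{F}_j)$ to $\mathbb{R}^{L_j}$ with its Borel algebra. The fusion center receives $\mathbf{u}=[\mathbf{u}_1^T,\dots,\mathbf{u}_N^T]^T$ with $\mathbf{u}_j=\Gamma_j(\mathbf{x}_j)$. Let $\mathcal{S}_j$ be the set of all possible outcomes of $\Gamma_j$, so $|\mathcal{S}_j|=\prod_{l=1}^{L_j}R_{jl}$, and for $\mathbf{s}\in\mathcal{S}_j$ let $q_j^{(\mathbf{s})}(\theta)=\mathscr{P}_j^\theta(\Gamma_j(\mathbf{x}_j)=\mathbf{s})$. The Fisher information matrix for estimating $\theta$ from $\mathbf{u}$ is the $D_\theta\times D_\theta$ matrix $$\mathbf{J}(\theta)=\sum_{j=1}^N\sum_{\mathbf{s}\in\mathcal{S}_j}\frac{1}{q_j^{(\mathbf{s})}(\theta)}\frac{\partial q_j^{(\mathbf{s})}(\theta)}{\partial\theta}\left[\frac{\partial q_j^{(\mathbf{s})}(\theta)}{\partial\theta}\right]^T,$$ where summands with $q_j^{(\mathbf{s})}(\theta)=0$ are omitted. The quantity $\lambda(N,\{R_{jl}\})$ is called the inestimable dimension for quantized data (IDQD).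 *)

theory Defs
  imports "HOL-Probability.Probability"
begin

definition quant :: "(nat \<Rightarrow> nat \<Rightarrow> nat \<Rightarrow> (nat \<Rightarrow> real) set) \<Rightarrow> (nat \<Rightarrow> nat \<Rightarrow> nat)
    \<Rightarrow> nat \<Rightarrow> nat \<Rightarrow> (nat \<Rightarrow> real) \<Rightarrow> nat" where
  "quant I R j l y = (\<Sum>r\<in>{1..R j l}. if y \<in> I j l r then r else 0)"

definition superquant :: "(nat \<Rightarrow> nat \<Rightarrow> nat \<Rightarrow> (nat \<Rightarrow> real) set) \<Rightarrow> (nat \<Rightarrow> nat \<Rightarrow> nat)
    \<Rightarrow> (nat \<Rightarrow> nat) \<Rightarrow> (nat \<Rightarrow> nat \<Rightarrow> nat set) \<Rightarrow> nat \<Rightarrow> (nat \<Rightarrow> real) \<Rightarrow> nat list" where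
  "superquant I R L K j x = map (\<lambda>l. quant I R j l (restrict x (K j l))) [0..<L j]"

definition outcomes :: "(nat \<Rightarrow> nat \<Rightarrow> nat) \<Rightarrow> (nat \<Rightarrow> nat) \<Rightarrow> nat \<Rightarrow> nat list set" where
  "outcomes R L j = {s. length s = L j \<and> (\<forall>l<L j. s ! l \<in> {1..R j l})}"

definition grad :: "(real ^ 'd \<Rightarrow> real) \<Rightarrow> real ^ 'd \<Rightarrow> real ^ 'd" where
  "grad f x = (\<chi> i. frechet_derivative f (at x) (axis i 1))"

definition twice_differentiable_at :: "(real ^ 'd \<Rightarrow> real) \<Rightarrow> real ^ 'd \<Rightarrow> bool" where
  "twice_differentiable_at f x \<longleftrightarrow>
     (\<exists>g. (\<forall>\<^sub>F y in nhds x. (f has_derivative (\<lambda>h. g y \<bullet> h)) (at y)) \<and> g differentiable (at x))"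

text \<open>Fisher information matrix of the quantized data, q j s th = probability of outcome s at sensor j.\<close>
definition fisher :: "nat \<Rightarrow> (nat \<Rightarrow> nat list set) \<Rightarrow> (nat \<Rightarrow> nat list \<Rightarrow> real ^ 'd \<Rightarrow> real)
    \<Rightarrow> real ^ 'd \<Rightarrow> real ^ 'd ^ 'd" where
  "fisher N S q th = (\<Sum>j<N. \<Sum>s\<in>{s\<in>S j. q j s th \<noteq> 0}.
      (\<chi> a b. (1 / q j s th) * (grad (q j s) th $ a) * (grad (q j s) th $ b)))"

definition IDQD :: "nat \<Rightarrow> (nat \<Rightarrow> nat) \<Rightarrow> (nat \<Rightarrow> nat \<Rightarrow> nat) \<Rightarrow> int" where
  "IDQD N L R = (\<Sum>j<N. \<Prod>l<L j. int (R j l)) - int N"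

end

theory Submission
  imports Defs
begin



lemma outcomes_fin_card:
  assumes "\<And>l. finite (A l)"
  shows "finite {s. length s = m \<and> (\<forall>l<m. s!l \<in> A l)} \<and>
         card {s. length s = m \<and> (\<forall>l<m. s!l \<in> A l)} \<le> (\<Prod>l<m. card (A l))"
proof (induction m)
  case 0
  have "{s. length s = (0::nat) \<and> (\<forall>l<0. s!l \<in> A l)} = {[]}" by auto
  then show ?case by simp
next
  case (Suc m)
  let ?T = "{s. length s = m \<and> (\<forall>l<m. s!l \<in> A l)}"
  let ?f = "\<lambda>(s, a). s @ [a]"
  have sub: "{s. length s = Suc m \<and> (\<forall>l<Suc m. s!l \<in> A l)} \<subseteq> ?f ` (?T \<times> A m)"
  proof
    fix s assume s: "s \<in> {s. length s = Suc m \<and> (\<forall>l<Suc m. s!l \<in> A l)}"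
    then have ne: "s \<noteq> []" by auto
    have eq: "s = butlast s @ [last s]" using ne by simp
    have "butlast s \<in> ?T" using s by (auto simp: nth_butlast)
    moreover have "last s = s ! m" using ne s by (simp add: last_conv_nth)
    then have "last s \<in> A m" using s by simp
    ultimately have "(butlast s, last s) \<in> ?T \<times> A m" by blast
    then show "s \<in> ?f ` (?T \<times> A m)" by (rule image_eqI[rotated]) (simp flip: eq)
  qed
  have fin: "finite (?T \<times> A m)" using Suc assms by auto
  have "card {s. length s = Suc m \<and> (\<forall>l<Suc m. s!l \<in> A l)} \<le> card (?f ` (?T \<times> A m))"
    by (rule card_mono[OF finite_imageI[OF fin] sub])
  also have "\<dots> \<le> card (?T \<times> A m)" by (rule card_image_le[OF fin])
  also have "\<dots> = card ?T * card (A m)" by (simp add: card_cartesian_product)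
  also have "\<dots> \<le> (\<Prod>l<Suc m. card (A l))" using Suc.IH by (simp add: mult_right_mono)
  finally have c: "card {s. length s = Suc m \<and> (\<forall>l<Suc m. s!l \<in> A l)} \<le> (\<Prod>l<Suc m. card (A l))" .
  have "finite {s. length s = Suc m \<and> (\<forall>l<Suc m. s!l \<in> A l)}"
    by (rule finite_subset[OF sub finite_imageI[OF fin]])
  with c show ?case by simp
qed

lemma quant_val:
  fixes Rv r0 :: nat
  assumes "\<And>r r'. r \<in> {1..Rv} \<Longrightarrow> r' \<in> {1..Rv} \<Longrightarrow> r \<noteq> r' \<Longrightarrow> Iv r \<inter> Iv r' = {}"
    and "r0 \<in> {1..Rv}" "y \<in> Iv r0"
  shows "(\<Sum>r\<in>{1..Rv}. if y \<in> Iv r then r else 0) = r0"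
proof -
  have "(\<Sum>r\<in>{1..Rv}. if y \<in> Iv r then r else 0) = (\<Sum>r\<in>{1..Rv}. if r = r0 then r0 else 0)"
  proof (rule sum.cong[OF refl])
    fix r assume r: "r \<in> {1..Rv}"
    show "(if y \<in> Iv r then r else 0) = (if r = r0 then r0 else 0)"
    proof (cases "r = r0")
      case True then show ?thesis using assms(3) by simp
    next
      case False
      then have "Iv r \<inter> Iv r0 = {}" using assms(1)[OF r assms(2)] by simp
      then have "y \<notin> Iv r" using assms(3) by blast
      then show ?thesis using False by simp
    qed
  qed
  also have "\<dots> = r0" using assms(2) by (subst sum.delta) simp_all
  finally show ?thesis .
qed

lemma mat_zero:
  fixes g :: "'j \<Rightarrow> 's \<Rightarrow> real^'d" and c :: "'j \<Rightarrow> 's \<Rightarrow> real" and v :: "real^'d"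
  assumes "\<And>j s. j \<in> J \<Longrightarrow> s \<in> T j \<Longrightarrow> g j s \<bullet> v = 0"
  shows "(\<Sum>j\<in>J. \<Sum>s\<in>T j. (\<chi> a b. c j s * (g j s $ a) * (g j s $ b))) *v v = 0"
proof (subst vec_eq_iff, intro allI)
  fix a
  have "((\<Sum>j\<in>J. \<Sum>s\<in>T j. (\<chi> a b. c j s * (g j s $ a) * (g j s $ b))) *v v) $ a
     = (\<Sum>b\<in>UNIV. (\<Sum>j\<in>J. \<Sum>s\<in>T j. c j s * (g j s $ a) * (g j s $ b)) * v $ b)"
    by (simp add: matrix_vector_mult_def)
  also have "\<dots> = (\<Sum>b\<in>UNIV. \<Sum>j\<in>J. \<Sum>s\<in>T j. c j s * (g j s $ a) * (g j s $ b * v $ b))"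
    by (simp add: sum_distrib_right mult.assoc)
  also have "\<dots> = (\<Sum>j\<in>J. \<Sum>b\<in>UNIV. \<Sum>s\<in>T j. c j s * (g j s $ a) * (g j s $ b * v $ b))"
    by (rule sum.swap)
  also have "\<dots> = (\<Sum>j\<in>J. \<Sum>s\<in>T j. \<Sum>b\<in>UNIV. c j s * (g j s $ a) * (g j s $ b * v $ b))"
    by (intro sum.cong refl sum.swap)
  also have "\<dots> = (\<Sum>j\<in>J. \<Sum>s\<in>T j. c j s * (g j s $ a) * (g j s \<bullet> v))"
    by (intro sum.cong refl) (simp add: inner_vec_def sum_distrib_left)
  also have "\<dots> = 0" using assms by (intro sum.neutral ballI) simp
  finally show "((\<Sum>j\<in>J. \<Sum>s\<in>T j. (\<chi> a b. c j s * (g j s $ a) * (g j s $ b))) *v v) $ a = 0 $ a" by simp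
qed

theorem theorem1:
  fixes \<Theta> :: "(real ^ 'd) set"
    and N :: nat
    and n :: "nat \<Rightarrow> nat"
    and L :: "nat \<Rightarrow> nat"
    and K :: "nat \<Rightarrow> nat \<Rightarrow> nat set"
    and R :: "nat \<Rightarrow> nat \<Rightarrow> nat"
    and I :: "nat \<Rightarrow> nat \<Rightarrow> nat \<Rightarrow> (nat \<Rightarrow> real) set"
    and M :: "nat \<Rightarrow> (nat \<Rightarrow> real) measure"
    and P :: "nat \<Rightarrow> real ^ 'd \<Rightarrow> (nat \<Rightarrow> real) measure"
    and U :: "(real ^ 'd) set"
    and \<theta> :: "real ^ 'd"
  defines "q \<equiv> (\<lambda>j s th. measure (P j th) {x \<in> space (M j). superquant I R L K j x = s})"
  assumes N_pos: "N \<ge> 1"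
    and interior_ne: "interior \<Theta> \<noteq> {}"
    and vec_space: "\<And>j x i. j < N \<Longrightarrow> x \<in> space (M j) \<Longrightarrow> n j \<le> i \<Longrightarrow> x i = 0"
    and L_pos: "\<And>j. j < N \<Longrightarrow> L j \<ge> 1"
    and K_ne: "\<And>j l. j < N \<Longrightarrow> l < L j \<Longrightarrow> K j l \<noteq> {}"
    and K_disj: "\<And>j l l'. j < N \<Longrightarrow> l < L j \<Longrightarrow> l' < L j \<Longrightarrow> l \<noteq> l' \<Longrightarrow> K j l \<inter> K j l' = {}"
    and K_cover: "\<And>j. j < N \<Longrightarrow> (\<Union>l<L j. K j l) = {..<n j}"
    and R_pos: "\<And>j l. j < N \<Longrightarrow> l < L j \<Longrightarrow> R j l \<ge> 1"
    and I_disj: "\<And>j l r r'. j < N \<Longrightarrow> l < L j \<Longrightarrow> r \<in> {1..R j l} \<Longrightarrow> r' \<in> {1..R j l}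
                   \<Longrightarrow> r \<noteq> r' \<Longrightarrow> I j l r \<inter> I j l r' = {}"
    and I_cover: "\<And>j l x. j < N \<Longrightarrow> l < L j \<Longrightarrow> x \<in> space (M j)
                   \<Longrightarrow> \<exists>r\<in>{1..R j l}. restrict x (K j l) \<in> I j l r"
    and Gamma_meas: "\<And>j. j < N \<Longrightarrow> superquant I R L K j \<in> measurable (M j) (count_space UNIV)"
    and U_open: "open U"
    and Theta_U: "\<Theta> \<subseteq> U"
    and P_sets: "\<And>j th. j < N \<Longrightarrow> th \<in> U \<Longrightarrow> sets (P j th) = sets (M j)"
    and P_prob: "\<And>j th. j < N \<Longrightarrow> th \<in> U \<Longrightarrow> prob_space (P j th)"
    and q_C2: "\<And>j s th. j < N \<Longrightarrow> s \<in> outcomes R L j \<Longrightarrow> th \<in> \<Theta>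
                   \<Longrightarrow> twice_differentiable_at (q j s) th"
    and theta_in: "\<theta> \<in> \<Theta>"
    and dim_big: "int CARD('d) > IDQD N L R"
  shows "\<not> invertible (fisher N (outcomes R L) q \<theta>)"
proof -
  define S where "S = outcomes R L"
  define \<Gamma> where "\<Gamma> = superquant I R L K"
  have finS: "finite (S j)" and cardS: "card (S j) \<le> (\<Prod>l<L j. R j l)" for j
    using outcomes_fin_card[of "\<lambda>l. {1..R j l}" "L j"]
    by (auto simp: S_def outcomes_def)
  have GinS: "\<Gamma> j x \<in> S j" if j: "j < N" and x: "x \<in> space (M j)" for j x
  proof -
    have "quant I R j l (restrict x (K j l)) \<in> {1..R j l}" if l: "l < L j" for l
    proof -
      obtain r0 where r0: "r0 \<in> {1..R j l}" "restrict x (K j l) \<in> I j l r0"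
        using I_cover[OF j l x] by blast
      have "quant I R j l (restrict x (K j l)) = r0"
        unfolding quant_def using I_disj[OF j l] r0 by (intro quant_val) auto
      with r0 show ?thesis by simp
    qed
    then show ?thesis by (simp add: \<Gamma>_def S_def outcomes_def superquant_def)
  qed
  have sum1: "(\<Sum>s\<in>S j. q j s th) = 1" if j: "j < N" and th: "th \<in> U" for j th
  proof -
    interpret p: prob_space "P j th" using P_prob[OF j th] .
    have sp: "space (P j th) = space (M j)" using P_sets[OF j th] by (rule sets_eq_imp_space_eq)
    define A where "A s = {x \<in> space (M j). \<Gamma> j x = s}" for s
    have Aeq: "A s = \<Gamma> j -` {s} \<inter> space (M j)" for s by (auto simp: A_def)
    have As: "A s \<in> sets (P j th)" for s
      unfolding Aeq P_sets[OF j th]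
      using measurable_sets[OF Gamma_meas[OF j], of "{s}"] by (simp add: \<Gamma>_def)
    have U: "(\<Union>s\<in>S j. A s) = space (M j)" using GinS[OF j] by (auto simp: A_def)
    have "measure (P j th) (\<Union>s\<in>S j. A s) = (\<Sum>s\<in>S j. measure (P j th) (A s))"
      using finS As by (intro p.finite_measure_finite_Union) (auto simp: disjoint_family_on_def A_def)
    moreover have "measure (P j th) (\<Union>s\<in>S j. A s) = 1" using U sp p.prob_space by simp
    ultimately show ?thesis by (simp add: q_def A_def \<Gamma>_def)
  qed
  have \<theta>U: "\<theta> \<in> U" using theta_in Theta_U by blast
  have der: "(q j s has_derivative frechet_derivative (q j s) (at \<theta>)) (at \<theta>)"
    if j: "j < N" and s: "s \<in> S j" for j s
  proof -
    obtain g where "\<forall>\<^sub>F y in nhds \<theta>. (q j s has_derivative (\<lambda>h. g y \<bullet> h)) (at y)"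
      using q_C2[OF j _ theta_in] s by (auto simp: S_def twice_differentiable_at_def)
    then have "(q j s has_derivative (\<lambda>h. g \<theta> \<bullet> h)) (at \<theta>)"
      using eventually_nhds_x_imp_x by blast
    then have "q j s differentiable at \<theta>" by (rule differentiableI)
    then show ?thesis by (rule frechet_derivative_works[THEN iffD1])
  qed
  define g where "g j s = grad (q j s) \<theta>" for j s
  have gsum: "(\<Sum>s\<in>S j. g j s) = 0" if j: "j < N" for j
  proof -
    have d1: "((\<lambda>th. \<Sum>s\<in>S j. q j s th) has_derivative
              (\<lambda>h. \<Sum>s\<in>S j. frechet_derivative (q j s) (at \<theta>) h)) (at \<theta>)"
      using der[OF j] by (intro has_derivative_sum) auto
    have "((\<lambda>th. 1::real) has_derivative (\<lambda>h. 0)) (at \<theta>)" by simp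
    then have d2: "((\<lambda>th. \<Sum>s\<in>S j. q j s th) has_derivative (\<lambda>h. 0)) (at \<theta>)"
      by (rule has_derivative_transform_within_open[where s = U]) (use U_open \<theta>U sum1[OF j] in auto)
    have eq: "(\<lambda>h. \<Sum>s\<in>S j. frechet_derivative (q j s) (at \<theta>) h) = (\<lambda>h. 0)"
      using has_derivative_unique[OF d1 d2] .
    show ?thesis
    proof (subst vec_eq_iff, intro allI)
      fix i
      have "(\<Sum>s\<in>S j. g j s) $ i = (\<Sum>s\<in>S j. frechet_derivative (q j s) (at \<theta>) (axis i 1))"
        by (simp add: g_def grad_def sum_component)
      also have "\<dots> = 0" using fun_cong[OF eq, of "axis i 1"] by simp
      finally show "(\<Sum>s\<in>S j. g j s) $ i = 0 $ i" by simp
    qed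
  qed
  have Sne: "S j \<noteq> {}" if j: "j < N" for j
  proof -
    have "map (\<lambda>l. 1) [0..<L j] \<in> S j" using R_pos[OF j] by (auto simp: S_def outcomes_def)
    then show ?thesis by blast
  qed
  define s0 where "s0 j = (SOME s. s \<in> S j)" for j
  have s0S: "s0 j \<in> S j" if "j < N" for j using Sne[OF that] unfolding s0_def by (simp add: some_in_eq)
  define G where "G = (\<Union>j<N. g j ` (S j - {s0 j}))"
  have finG: "finite G" using finS by (auto simp: G_def)
  have cardG: "card G \<le> (\<Sum>j<N. card (S j) - 1)"
  proof -
    have "card G \<le> (\<Sum>j<N. card (g j ` (S j - {s0 j})))" unfolding G_def by (rule card_UN_le) simp
    also have "\<dots> \<le> (\<Sum>j<N. card (S j) - 1)"
    proof (rule sum_mono)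
      fix j assume "j \<in> {..<N}"
      then have "s0 j \<in> S j" using s0S by auto
      then have "card (S j - {s0 j}) = card (S j) - 1" using finS by (simp add: card_Diff_singleton)
      moreover have "card (g j ` (S j - {s0 j})) \<le> card (S j - {s0 j})"
        using finS by (intro card_image_le) simp
      ultimately show "card (g j ` (S j - {s0 j})) \<le> card (S j) - 1" by simp
    qed
    finally show ?thesis .
  qed
  have ineq: "int (\<Sum>j<N. card (S j) - 1) \<le> IDQD N L R"
  proof -
    have "int (\<Sum>j<N. card (S j) - 1) = (\<Sum>j<N. int (card (S j) - 1))" by (rule of_nat_sum)
    also have "\<dots> = (\<Sum>j<N. int (card (S j)) - 1)"
    proof (rule sum.cong[OF refl])
      fix j assume "j \<in> {..<N}"
      then have "card (S j) \<ge> 1" using Sne finS by (simp add: Suc_le_eq card_gt_0_iff)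
      then show "int (card (S j) - 1) = int (card (S j)) - 1" by simp
    qed
    also have "\<dots> \<le> (\<Sum>j<N. (\<Prod>l<L j. int (R j l)) - 1)"
    proof (rule sum_mono)
      fix j assume "j \<in> {..<N}"
      have "int (card (S j)) \<le> int (\<Prod>l<L j. R j l)" using cardS[of j] by (simp only: of_nat_le_iff)
      then show "int (card (S j)) - 1 \<le> (\<Prod>l<L j. int (R j l)) - 1" by simp
    qed
    also have "\<dots> = IDQD N L R" by (simp add: IDQD_def sum_subtractf)
    finally show ?thesis .
  qed
  have "dim G < DIM(real^'d)"
  proof -
    have "dim G \<le> card G" using finG by (intro dim_le_card) (auto intro: span_base)
    then have "dim G \<le> (\<Sum>j<N. card (S j) - 1)" using cardG by linarith
    then have "int (dim G) \<le> int (\<Sum>j<N. card (S j) - 1)" by (simp only: of_nat_le_iff)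
    then have "int (dim G) < int CARD('d)" using ineq dim_big by linarith
    then show ?thesis by simp
  qed
  then obtain v :: "real^'d" where v0: "v \<noteq> 0" and vorth: "\<And>y. y \<in> span G \<Longrightarrow> orthogonal v y"
    using orthogonal_to_subspace_exists[of G] by blast
  have gspan: "g j s \<in> span G" if j: "j < N" and s: "s \<in> S j" for j s
  proof (cases "s = s0 j")
    case False
    then have "g j s \<in> G" using j s unfolding G_def by blast
    then show ?thesis by (rule span_base)
  next
    case True
    have "(\<Sum>s\<in>S j. g j s) = g j (s0 j) + (\<Sum>s\<in>S j - {s0 j}. g j s)"
      by (rule sum.remove[OF finS s0S[OF j]])
    then have "g j s = - (\<Sum>s\<in>S j - {s0 j}. g j s)" using gsum[OF j] True
      by (simp add: eq_neg_iff_add_eq_0)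
    moreover have "(\<Sum>s\<in>S j - {s0 j}. g j s) \<in> span G"
    proof (rule span_sum)
      fix x assume "x \<in> S j - {s0 j}"
      then have "g j x \<in> G" using j unfolding G_def by blast
      then show "g j x \<in> span G" by (rule span_base)
    qed
    ultimately show ?thesis by (simp add: span_neg)
  qed
  have gv: "g j s \<bullet> v = 0" if "j < N" "s \<in> S j" for j s
  proof -
    have "v \<bullet> g j s = 0" using vorth[OF gspan[OF that]] by (simp add: orthogonal_def)
    then show ?thesis by (metis inner_commute)
  qed
  have Fv: "fisher N (outcomes R L) q \<theta> *v v = 0"
    unfolding fisher_def
    by (rule mat_zero[where J = "{..<N}" and T = "\<lambda>j. {s \<in> outcomes R L j. q j s \<theta> \<noteq> 0}"
          and g = "\<lambda>j s. grad (q j s) \<theta>" and c = "\<lambda>j s. 1 / q j s \<theta>"])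
       (use gv in \<open>auto simp: g_def S_def\<close>)
  show ?thesis
  proof
    assume "invertible (fisher N (outcomes R L) q \<theta>)"
    then have "inj ((*v) (fisher N (outcomes R L) q \<theta>))" by (rule inj_matrix_vector_mult)
    moreover have "fisher N (outcomes R L) q \<theta> *v v = fisher N (outcomes R L) q \<theta> *v 0"
      using Fv by simp
    ultimately have "v = 0" by (rule injD)
    then show False using v0 by simp
  qed
qed

end
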